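(* Let $\lambda\in\mathbb R$ and $\eta\ge0$. Let $(P_n)_{n\ge0}$ be the monic polynomials with $P_{-1}=0$, $P_0=1$, $xP_0=P_1$, $xP_1=P_2+\lambda P_1+P_0$ and $xP_n=P_{n+1}+\lambda P_n+(1+\eta)P_{n-1}$ for $n\ge2$, let $\mu_{\lambda,\eta}$ be their compactly supported orthogonality measure, and let $\partial^\dagger_{\lambda,\eta}$ be the bounded operator on $L^2(\mathbb R,\mu_{\lambda,\eta})$ determined by $\partial^\dagger_{\lambda,\eta}P_n=P_{n+1}$, $n\ge0$. Let $\Psi_{\lambda,\eta+1}(w)=\dfrac{w}{1+\lambda w+(\eta+1)w^2}$ and let $\Psi^{-1}_{\lambda,\eta+1}$ be its compositional inverse near $0$ (with $\Psi^{-1}_{\lambda,\eta+1}(0)=0$). Then there exists $\varepsilon>0$ such that for all real $z$ with $|z|<\varepsilon$, in $L^2(\mu_{\lambda,\eta})$, $$\partial^\dagger_{\lambda,\eta}(1-xz)^{-1}=\left(\frac{x-\Psi^{-1}_{\lambda,\eta+1}(z)}{1+\lambda\Psi^{-1}_{\lambda,\eta+1}(z)+\eta\bigl(\Psi^{-1}_{\lambda,\eta+1}(z)\bigr)^2}\right)(1-xz)^{-1},$$ and, for $0<|z|<\varepsilon$, with $R(z)=\sqrt{(1-\lambda z)^2-4z^2(\eta+1)}$ (principal branch, $R(0)=1$), this equals $$\left(x\,\frac{4z^2(\eta+1)^2}{\bigl(2\eta+1+\lambda z+R(z)\bigr)\bigl(1-\lambda z-R(z)\bigr)}-\frac{2z(\eta+1)}{2\eta+1+\lambda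 z+R(z)}\right)(1-xz)^{-1}.$$
   Context: For $|z|$ small, $x\mapsto(1-xz)^{-1}$ is a bounded continuous function on the support of $\mu_{\lambda,\eta}$, hence an element of $L^2(\mu_{\lambda,\eta})$; $x$ denotes multiplication by the variable. *)

theory Defs
  imports "HOL-Probability.Probability" "HOL-Computational_Algebra.Polynomial"
begin

fun Pmu :: "real \<Rightarrow> real \<Rightarrow> nat \<Rightarrow> real poly" where
  "Pmu lam eta 0 = 1"
| "Pmu lam eta (Suc 0) = [:0, 1:]"
| "Pmu lam eta (Suc (Suc n)) =
     [:- lam, 1:] * Pmu lam eta (Suc n) - smult (if n = 0 then 1 else 1 + eta) (Pmu lam eta n)"

definition sq_int :: "real measure \<Rightarrow> (real \<Rightarrow> real) \<Rightarrow> bool" where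
  "sq_int M f \<longleftrightarrow> f \<in> borel_measurable M \<and> integrable M (\<lambda>x. (f x)\<^sup>2)"

text \<open>A bounded linear operator on L^2(M), acting on representatives and
  compatible with almost-everywhere equality.\<close>
definition bounded_L2_op :: "real measure \<Rightarrow> ((real \<Rightarrow> real) \<Rightarrow> (real \<Rightarrow> real)) \<Rightarrow> bool" where
  "bounded_L2_op M T \<longleftrightarrow>
     (\<forall>f. sq_int M f \<longrightarrow> sq_int M (T f)) \<and>
     (\<forall>f g. sq_int M f \<longrightarrow> sq_int M g \<longrightarrow> (AE x in M. f x = g x) \<longrightarrow> (AE x in M. T f x = T g x)) \<and>
     (\<forall>f g. sq_int M f \<longrightarrow> sq_int M g \<longrightarrow> (AE x in M. T (\<lambda>t. f t + g t) x = T f x + T g x)) \<and>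
     (\<forall>f c. sq_int M f \<longrightarrow> (AE x in M. T (\<lambda>t. c * f t) x = c * T f x)) \<and>
     (\<exists>C. \<forall>f. sq_int M f \<longrightarrow> (\<integral>x. (T f x)\<^sup>2 \<partial>M) \<le> C * (\<integral>x. (f x)\<^sup>2 \<partial>M))"

definition Psi :: "real \<Rightarrow> real \<Rightarrow> real \<Rightarrow> real" where
  "Psi lam eta w = w / (1 + lam * w + eta * w\<^sup>2)"

end

theory Submission
  imports Defs
begin

locale L2s = prob_space \<mu> for \<mu> :: "real measure" +
  fixes K :: "real set"
  assumes sets_mu: "sets \<mu> = sets borel" and cK: "compact K"
    and nullK: "emeasure \<mu> (UNIV - K) = 0"
begin

lemma space_mu: "space \<mu> = UNIV"
  using sets_eq_imp_space_eq[OF sets_mu] by simp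

lemma meas: "h \<in> borel_measurable borel \<Longrightarrow> h \<in> borel_measurable \<mu>"
  by (metis measurable_cong_sets[OF sets_mu refl])

lemma AE_K: "AE x in \<mu>. x \<in> K"
proof (rule AE_I')
  have "UNIV - K \<in> sets \<mu>" using sets_mu cK
    by (simp add: borel_open compact_imp_closed open_Diff)
  then show "UNIV - K \<in> null_sets \<mu>" using nullK by (simp add: null_setsI)
  show "{x \<in> space \<mu>. x \<notin> K} \<subseteq> UNIV - K" by auto
qed

lemma sq_int_bdd:
  assumes m: "h \<in> borel_measurable \<mu>" and b: "AE x in \<mu>. \<bar>h x\<bar> \<le> b"
  shows "sq_int \<mu> h" "(\<integral>x. (h x)\<^sup>2 \<partial>\<mu>) \<le> b\<^sup>2"
proof -
  have b2: "AE x in \<mu>. (h x)\<^sup>2 \<le> b\<^sup>2"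
    using b by eventually_elim (metis abs_ge_zero power2_abs power_mono)
  have i: "integrable \<mu> (\<lambda>x. (h x)\<^sup>2)"
    by (rule integrable_const_bound[where B="b\<^sup>2"]) (use b2 m in auto)
  then show "sq_int \<mu> h" using m by (simp add: sq_int_def)
  have "(\<integral>x. (h x)\<^sup>2 \<partial>\<mu>) \<le> (\<integral>x. b\<^sup>2 \<partial>\<mu>)"
    by (rule integral_mono_AE[OF i]) (use b2 in auto)
  also have "\<dots> = b\<^sup>2" using prob_space by simp
  finally show "(\<integral>x. (h x)\<^sup>2 \<partial>\<mu>) \<le> b\<^sup>2" .
qed

lemma sq_int_cont:
  assumes "continuous_on UNIV h" shows "sq_int \<mu> h"
proof -
  have "compact (h ` K)" using assms cK compact_continuous_image continuous_on_subset by blast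
  then obtain b where b: "\<forall>y\<in>h ` K. norm y \<le> b" using compact_imp_bounded bounded_iff by metis
  have "AE x in \<mu>. \<bar>h x\<bar> \<le> b" using AE_K by eventually_elim (use b in auto)
  then show ?thesis using sq_int_bdd meas borel_measurable_continuous_onI assms by blast
qed

lemma sq_int_diff:
  assumes "sq_int \<mu> f" "sq_int \<mu> g" shows "sq_int \<mu> (\<lambda>x. f x - g x)"
proof -
  have m: "f \<in> borel_measurable \<mu>" "g \<in> borel_measurable \<mu>" and i: "integrable \<mu> (\<lambda>x. (f x)\<^sup>2)" "integrable \<mu> (\<lambda>x. (g x)\<^sup>2)"
    using assms by (auto simp: sq_int_def)
  have i2: "integrable \<mu> (\<lambda>x. 2*(f x)\<^sup>2 + 2*(g x)\<^sup>2)" using i by auto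
  have m2: "(\<lambda>x. (f x - g x)\<^sup>2) \<in> borel_measurable \<mu>" using m by measurable
  have ae: "AE x in \<mu>. norm ((f x - g x)\<^sup>2) \<le> norm (2*(f x)\<^sup>2 + 2*(g x)\<^sup>2)"
  proof (intro AE_I2)
    fix x
    have e: "(f x - g x)\<^sup>2 + (f x + g x)\<^sup>2 = 2*(f x)\<^sup>2 + 2*(g x)\<^sup>2" by algebra
    have "0 \<le> (f x + g x)\<^sup>2" by simp
    then have "(f x - g x)\<^sup>2 \<le> 2*(f x)\<^sup>2 + 2*(g x)\<^sup>2" using e by linarith
    then show "norm ((f x - g x)\<^sup>2) \<le> norm (2*(f x)\<^sup>2 + 2*(g x)\<^sup>2)" by simp
  qed
  have "integrable \<mu> (\<lambda>x. (f x - g x)\<^sup>2)" using Bochner_Integration.integrable_bound[OF i2 m2 ae] .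
  then show ?thesis using m by (auto simp: sq_int_def)
qed

end

lemma poly_P2: "poly (Pmu lam eta (Suc (Suc n))) x =
   (x - lam) * poly (Pmu lam eta (Suc n)) x - (if n = 0 then 1 else 1 + eta) * poly (Pmu lam eta n) x"
  by (simp add: algebra_simps)

lemma Pbound:
  fixes lam eta B x :: real
  assumes eta: "eta \<ge> 0" and B: "0 \<le> B" "\<bar>x\<bar> \<le> B"
  defines "M \<equiv> B + \<bar>lam\<bar> + eta + 2"
  shows "\<bar>poly (Pmu lam eta n) x\<bar> \<le> M ^ n"
proof -
  have M1: "1 \<le> M" using eta B by (simp add: M_def)
  have "\<bar>poly (Pmu lam eta n) x\<bar> \<le> M ^ n \<and> \<bar>poly (Pmu lam eta (Suc n)) x\<bar> \<le> M ^ Suc n"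
  proof (induction n)
    case 0 then show ?case using B M1 eta by (simp add: M_def; smt (verit) abs_ge_zero)
  next
    case (Suc n)
    let ?a = "poly (Pmu lam eta n) x" and ?b = "poly (Pmu lam eta (Suc n)) x"
    have ha: "\<bar>?a\<bar> \<le> M^n" and hb: "\<bar>?b\<bar> \<le> M * M^n" using Suc by auto
    have c: "\<bar>(if n = 0 then 1 else 1 + eta)\<bar> \<le> 1 + eta" using eta by auto
    have xl: "\<bar>x - lam\<bar> \<le> B + \<bar>lam\<bar>" using B by linarith
    have Mn: "0 \<le> M^n" using M1 by simp
    have "\<bar>poly (Pmu lam eta (Suc (Suc n))) x\<bar> \<le> \<bar>x - lam\<bar> * \<bar>?b\<bar> + \<bar>(if n = 0 then 1 else 1 + eta)\<bar> * \<bar>?a\<bar>"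
      unfolding poly_P2 by (simp add: abs_mult[symmetric] abs_triangle_ineq4)
    also have "\<dots> \<le> (B + \<bar>lam\<bar>) * (M * M^n) + (1 + eta) * M^n"
      by (intro add_mono mult_mono xl hb c ha) (use B eta in auto)
    also have "\<dots> \<le> M * (M * M^n)"
    proof -
      have "(B + \<bar>lam\<bar>) * M + (1 + eta) \<le> M * M"
      proof -
        have "(1 + eta) \<le> (eta + 2) * M" using M1 eta by (smt (verit) mult_le_cancel_left1)
        then show ?thesis by (simp add: M_def algebra_simps)
      qed
      then have "((B + \<bar>lam\<bar>) * M + (1 + eta)) * M^n \<le> (M * M) * M^n" using Mn by (rule mult_right_mono)
      then show ?thesis by (simp add: algebra_simps)
    qed
    finally show ?case using Suc by simp
  qed
  then show ?thesis by simp
qed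

lemma Sident:
  fixes lam eta w x :: real
  defines "E \<equiv> 1 + eta"
  shows "(1 - (x - lam) * w + E * w\<^sup>2) * (\<Sum>k<Suc (Suc n). poly (Pmu lam eta k) x * w^k)
     = (1 + lam * w + eta * w\<^sup>2) - (poly (Pmu lam eta (Suc (Suc n))) x * w^(Suc (Suc n))
        - E * poly (Pmu lam eta (Suc n)) x * w^(Suc (Suc (Suc n))))"
proof (induction n)
  case 0 then show ?case by (simp add: E_def algebra_simps power2_eq_square)
next
  case (Suc n)
  let ?Q = "1 - (x - lam) * w + E * w\<^sup>2"
  have "?Q * (\<Sum>k<Suc (Suc (Suc n)). poly (Pmu lam eta k) x * w^k)
     = ?Q * (\<Sum>k<Suc (Suc n). poly (Pmu lam eta k) x * w^k) + ?Q * (poly (Pmu lam eta (Suc (Suc n))) x * w^(Suc (Suc n)))"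
    by (simp add: algebra_simps)
  also have "\<dots> = (1 + lam * w + eta * w\<^sup>2) - (poly (Pmu lam eta (Suc (Suc n))) x * w^(Suc (Suc n))
        - E * poly (Pmu lam eta (Suc n)) x * w^(Suc (Suc (Suc n)))) + ?Q * (poly (Pmu lam eta (Suc (Suc n))) x * w^(Suc (Suc n)))"
    by (simp only: Suc.IH)
  finally show ?case by (simp only: poly_P2[of lam eta "Suc n"]) (simp add: E_def algebra_simps power2_eq_square)
qed


lemma rbound:
  fixes lam eta B x w :: real
  assumes eta: "eta \<ge> 0" and B: "0 \<le> B" "\<bar>x\<bar> \<le> B" and w1: "\<bar>w\<bar> \<le> 1"
  defines "M \<equiv> B + \<bar>lam\<bar> + eta + 2"
  shows "\<bar>poly (Pmu lam eta (Suc m)) x * w^(Suc m) - (1+eta) * poly (Pmu lam eta m) x * w^(Suc (Suc m))\<bar>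
     \<le> (2 + eta) * (M * \<bar>w\<bar>)^(Suc m)"
proof -
  have M1: "1 \<le> M" using eta B by (simp add: M_def)
  have p1: "\<bar>poly (Pmu lam eta (Suc m)) x\<bar> \<le> M^Suc m" and p0: "\<bar>poly (Pmu lam eta m) x\<bar> \<le> M^m"
    unfolding M_def by (rule Pbound[OF eta B])+
  have a1: "\<bar>poly (Pmu lam eta (Suc m)) x * w^(Suc m)\<bar> \<le> (M * \<bar>w\<bar>)^(Suc m)"
  proof -
    have "\<bar>poly (Pmu lam eta (Suc m)) x\<bar> * \<bar>w\<bar>^(Suc m) \<le> M^Suc m * \<bar>w\<bar>^(Suc m)"
      using p1 by (rule mult_right_mono) simp
    then show ?thesis by (simp add: abs_mult power_abs power_mult_distrib mult_ac)
  qed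
  have "\<bar>w\<bar>^2 \<le> M * \<bar>w\<bar>" using w1 M1
    by (metis abs_ge_zero mult_right_mono order.trans power2_eq_square mult_1)
  then have "\<bar>w\<bar>^m * \<bar>w\<bar>^2 \<le> \<bar>w\<bar>^m * (M * \<bar>w\<bar>)" by (rule mult_left_mono) simp
  then have ww: "\<bar>w\<bar>^(Suc (Suc m)) \<le> \<bar>w\<bar>^m * (M * \<bar>w\<bar>)" by (simp add: power2_eq_square mult_ac)
  have "\<bar>poly (Pmu lam eta m) x\<bar> * \<bar>w\<bar>^(Suc (Suc m)) \<le> M^m * (\<bar>w\<bar>^m * (M * \<bar>w\<bar>))"
    using p0 ww by (intro mult_mono) auto
  then have a2: "\<bar>poly (Pmu lam eta m) x * w^(Suc (Suc m))\<bar> \<le> (M * \<bar>w\<bar>)^(Suc m)"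
    by (simp add: abs_mult power_abs power_mult_distrib algebra_simps)
  have "\<bar>(1+eta) * poly (Pmu lam eta m) x * w^(Suc (Suc m))\<bar> \<le> (1+eta) * (M * \<bar>w\<bar>)^(Suc m)"
    using a2 eta by (simp add: abs_mult mult.assoc mult_left_mono)
  moreover have "(2+eta) * (M * \<bar>w\<bar>)^(Suc m) = (M * \<bar>w\<bar>)^(Suc m) + (1+eta) * (M * \<bar>w\<bar>)^(Suc m)" by algebra
  ultimately show ?thesis using a1 abs_triangle_ineq4[of "poly (Pmu lam eta (Suc m)) x * w^(Suc m)" "(1+eta) * poly (Pmu lam eta m) x * w^(Suc (Suc m))"] by linarith
qed

context L2s begin

lemma D_sum:
  assumes D_bdd: "bounded_L2_op \<mu> D"
    and D_P: "\<And>n. AE x in \<mu>. D (poly (Pmu lam eta n)) x = poly (Pmu lam eta (Suc n)) x"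
  shows "AE x in \<mu>. D (\<lambda>t. \<Sum>k<N. a k * poly (Pmu lam eta k) t) x = (\<Sum>k<N. a k * poly (Pmu lam eta (Suc k)) x)"
proof (induction N)
  case 0
  have s: "sq_int \<mu> (poly (Pmu lam eta 0))" by (rule sq_int_cont) (intro continuous_intros)
  have "AE x in \<mu>. D (\<lambda>t. 0 * poly (Pmu lam eta 0) t) x = 0 * D (poly (Pmu lam eta 0)) x"
    using D_bdd s unfolding bounded_L2_op_def by blast
  then show ?case by simp
next
  case (Suc N)
  let ?S = "\<lambda>t. \<Sum>k<N. a k * poly (Pmu lam eta k) t"
  have sS: "sq_int \<mu> ?S" by (rule sq_int_cont) (intro continuous_intros)
  have sP: "sq_int \<mu> (poly (Pmu lam eta N))" by (rule sq_int_cont) (intro continuous_intros)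
  have sT: "sq_int \<mu> (\<lambda>t. a N * poly (Pmu lam eta N) t)" by (rule sq_int_cont) (intro continuous_intros)
  have add: "AE x in \<mu>. D (\<lambda>t. ?S t + a N * poly (Pmu lam eta N) t) x = D ?S x + D (\<lambda>t. a N * poly (Pmu lam eta N) t) x"
    using D_bdd sS sT unfolding bounded_L2_op_def by blast
  have sc: "AE x in \<mu>. D (\<lambda>t. a N * poly (Pmu lam eta N) t) x = a N * D (poly (Pmu lam eta N)) x"
    using D_bdd sP unfolding bounded_L2_op_def by blast
  show ?case using add sc Suc.IH D_P[of N] by eventually_elim simp
qed

end

lemma alg_h:
  fixes u base s S r :: real
  assumes "u \<noteq> 0" "base \<noteq> 0" "s*u*S = base - r"
  shows "1/u - (s/base)*S = r/(u*base)"
proof -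
  have "(1/u - (s/base)*S) * (u*base) = base - s*u*S" using assms(1,2) by (simp add: field_simps)
  also have "\<dots> = r" using assms(3) by simp
  finally show ?thesis using assms(1,2) by (simp add: eq_divide_eq)
qed

lemma alg_e:
  fixes u base s T r w x :: real
  assumes "u \<noteq> 0" "base \<noteq> 0" "w \<noteq> 0" "s*u*(1+w*T) = base - r" "s*u = s - x*w" "base = s - w\<^sup>2"
  shows "(s/base)*T - (x-w)/base*(1/u) = -r/(u*w*base)"
proof -
  have "((s/base)*T - (x-w)/base*(1/u)) * (u*w*base) = s*u*w*T - (x-w)*w" using assms(1,2,3) by (simp add: field_simps)
  also have "\<dots> = (base - r - s*u) - (x-w)*w" using assms(4) by (simp add: algebra_simps)
  also have "\<dots> = -r" using assms(5,6) by (simp add: algebra_simps power2_eq_square)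
  finally have "((s/base)*T - (x-w)/base*(1/u)) * (u*w*base) = -r" .
  moreover have "u*w*base \<noteq> 0" using assms(1,2,3) by simp
  ultimately show ?thesis by (metis nonzero_mult_div_cancel_right divide_minus_left)
qed


lemma inv_le2: fixes u :: real assumes "1/2 \<le> \<bar>u\<bar>" shows "\<bar>1/u\<bar> \<le> 2"
proof -
  have "0 < \<bar>u\<bar>" using assms by linarith
  then show ?thesis using assms by (simp add: abs_divide divide_le_eq)
qed

context L2s begin

lemma core:
  fixes lam eta z w B :: real
  assumes eta: "eta \<ge> 0" and D_bdd: "bounded_L2_op \<mu> D"
    and D_P: "\<And>n. AE x in \<mu>. D (poly (Pmu lam eta n)) x = poly (Pmu lam eta (Suc n)) x"
    and B: "0 \<le> B" "\<forall>x\<in>K. \<bar>x\<bar> \<le> B"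
    and w0: "w \<noteq> 0"
    and wz: "w = z * (1 + lam*w + (1+eta)*w\<^sup>2)"
    and zB: "\<bar>z\<bar> * B \<le> 1/2"
    and wM: "(B + \<bar>lam\<bar> + eta + 2) * \<bar>w\<bar> \<le> 1/2"
    and base: "1/2 \<le> 1 + lam*w + eta*w\<^sup>2"
  shows "AE x in \<mu>. D (\<lambda>t. 1/(1-t*z)) x = (x - w)/(1+lam*w+eta*w\<^sup>2) * (1/(1-x*z))"
proof -
  define M where "M = B + \<bar>lam\<bar> + eta + 2"
  define q where "q = M*\<bar>w\<bar>"
  define s where "s = 1 + lam*w + (1+eta)*w\<^sup>2"
  define bs where "bs = 1 + lam*w + eta*w\<^sup>2"
  define c where "c = s/bs"
  define f where "f = (\<lambda>t::real. 1/(1-t*z))"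
  define g where "g = (\<lambda>x. (x - w)/bs * f x)"
  define P where "P = Pmu lam eta"
  define SN where "SN n = (\<lambda>t. \<Sum>k<Suc(Suc n). (c*w^k) * poly (P k) t)" for n
  define e where "e n = (\<lambda>x. (\<Sum>k<Suc(Suc n). (c*w^k) * poly (P (Suc k)) x) - g x)" for n
  have M1: "1 \<le> M" unfolding M_def using B eta abs_ge_zero[of lam] by linarith
  have q0: "0 \<le> q" using M1 by (simp add: q_def)
  have q12: "q \<le> 1/2" using wM by (simp add: q_def M_def)
  have "1*\<bar>w\<bar> \<le> M*\<bar>w\<bar>" by (rule mult_right_mono[OF M1]) simp
  then have w1: "\<bar>w\<bar> \<le> 1/2" using q12 unfolding q_def by linarith
  have bs0: "bs \<noteq> 0" using base by (auto simp: bs_def)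
  have bs2: "\<bar>1/bs\<bar> \<le> 2" using base by (intro inv_le2) (simp add: bs_def)
  have uK: "1/2 \<le> \<bar>1 - x*z\<bar>" if "x \<in> K" for x
  proof -
    have "\<bar>x*z\<bar> \<le> B * \<bar>z\<bar>" using B that by (simp add: abs_mult mult_right_mono)
    moreover have "1 - \<bar>x*z\<bar> \<le> \<bar>1 - x*z\<bar>" by arith
    ultimately show ?thesis using zB by (simp add: mult.commute)
  qed
  have fK: "\<bar>f x\<bar> \<le> 2" if "x \<in> K" for x
    using inv_le2[OF uK[OF that]] by (simp add: f_def)
  have fm[measurable]: "f \<in> borel_measurable borel" unfolding f_def by measurable
  have gm[measurable]: "g \<in> borel_measurable borel" unfolding g_def by measurable
  have sf: "sq_int \<mu> f"
  proof -
    have "AE x in \<mu>. \<bar>f x\<bar> \<le> 2" using AE_K by eventually_elim (rule fK)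
    then show ?thesis by (rule sq_int_bdd(1)[OF meas[OF fm]])
  qed
  have gK: "\<bar>g x\<bar> \<le> (B+1)*2*2" if "x \<in> K" for x
  proof -
    have "\<bar>x\<bar> \<le> B" using B(2) that by blast
    then have "\<bar>x - w\<bar> \<le> B + 1" using w1 by arith
    then have "\<bar>x - w\<bar> * \<bar>1/bs\<bar> * \<bar>f x\<bar> \<le> (B+1)*2*2"
      using bs2 fK[OF that] B(1) by (intro mult_mono) auto
    then show ?thesis by (simp add: g_def abs_mult)
  qed
  have sg: "sq_int \<mu> g"
  proof -
    have "AE x in \<mu>. \<bar>g x\<bar> \<le> (B+1)*2*2" using AE_K by eventually_elim (rule gK)
    then show ?thesis by (rule sq_int_bdd(1)[OF meas[OF gm]])
  qed
  obtain C where C: "\<And>h. sq_int \<mu> h \<Longrightarrow> (\<integral>x. (D h x)\<^sup>2 \<partial>\<mu>) \<le> C * (\<integral>x. (h x)\<^sup>2 \<partial>\<mu>)"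
    using D_bdd unfolding bounded_L2_op_def by blast
  have sDf: "sq_int \<mu> (D f)" using D_bdd sf unfolding bounded_L2_op_def by blast
  have sI: "sq_int \<mu> (\<lambda>x. D f x - g x)" by (rule sq_int_diff[OF sDf sg])
  define A where "A = 2*\<bar>C\<bar>*(4*(2+eta))\<^sup>2 + 2*(4*(2+eta)*M)\<^sup>2"
  define I where "I = (\<integral>x. (D f x - g x)\<^sup>2 \<partial>\<mu>)"
  have Qsu: "1 - (x - lam) * w + (1+eta) * w\<^sup>2 = s * (1 - x*z)" for x
  proof -
    have zs: "z * s = w" using wz by (simp add: s_def)
    have a: "s * (1 - x * z) = s - x * (z * s)" by (simp add: algebra_simps)
    have b: "1 - (x - lam) * w + (1+eta) * w\<^sup>2 = s - x * w" by (simp add: s_def algebra_simps)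
    show ?thesis using a b zs by simp
  qed
  have bound: "I \<le> A * (q\<^sup>2)^(Suc (Suc n))" for n
  proof -
    let ?N = "Suc (Suc n)"
    define h where "h = (\<lambda>t. f t - SN n t)"
    have sS: "sq_int \<mu> (SN n)" unfolding SN_def by (rule sq_int_cont) (intro continuous_intros)
    have sh: "sq_int \<mu> h" unfolding h_def by (rule sq_int_diff[OF sf sS])
    have hK: "\<bar>h x\<bar> \<le> 4*(2+eta)*q^?N" if "x \<in> K" for x
    proof -
      define u where "u = 1 - x*z"
      have u0: "u \<noteq> 0" using uK[OF that] by (auto simp: u_def)
      define S where "S = (\<Sum>k<?N. poly (P k) x * w^k)"
      define r where "r = poly (Pmu lam eta (Suc (Suc n))) x * w^(Suc (Suc n))
        - (1+eta) * poly (Pmu lam eta (Suc n)) x * w^(Suc (Suc (Suc n)))"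
      have id: "s*u*S = bs - r" using Sident[of x lam w eta n] Qsu[of x]
        by (simp add: S_def r_def u_def bs_def P_def)
      have "SN n x = c * S" unfolding SN_def S_def sum_distrib_left by (rule sum.cong) (auto simp: mult_ac)
      then have "h x = r/(u*bs)" using alg_h[OF u0 bs0 id] by (simp add: h_def f_def u_def c_def)
      moreover have "\<bar>r\<bar> \<le> (2+eta) * q^?N"
        unfolding r_def q_def M_def using rbound[OF eta B(1) _, of x w lam "Suc n"] B(2) that w1 by simp
      moreover have "\<bar>1/u\<bar> \<le> 2" using inv_le2[OF uK[OF that]] by (simp add: u_def)
      moreover have "0 \<le> (2+eta) * q^?N" using eta q0 by simp
      ultimately have "\<bar>r\<bar> * \<bar>1/u\<bar> * \<bar>1/bs\<bar> \<le> ((2+eta) * q^?N) * 2 * 2"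
        using bs2 by (intro mult_mono) auto
      moreover have "\<bar>h x\<bar> = \<bar>r\<bar> * \<bar>1/u\<bar> * \<bar>1/bs\<bar>" using \<open>h x = r/(u*bs)\<close> by (simp add: abs_mult abs_divide)
      ultimately have "\<bar>h x\<bar> \<le> ((2+eta) * q^?N) * 2 * 2" by linarith
      also have "\<dots> = 4*(2+eta)*q^?N" by (simp add: algebra_simps)
      finally show ?thesis .
    qed
    have eK: "\<bar>e n x\<bar> \<le> 4*(2+eta)*M*q^?N" if "x \<in> K" for x
    proof -
      define u where "u = 1 - x*z"
      have u0: "u \<noteq> 0" using uK[OF that] by (auto simp: u_def)
      define T where "T = (\<Sum>k<?N. poly (P (Suc k)) x * w^k)"
      define r where "r = poly (Pmu lam eta (Suc (Suc (Suc n)))) x * w^(Suc (Suc (Suc n)))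
        - (1+eta) * poly (Pmu lam eta (Suc (Suc n))) x * w^(Suc (Suc (Suc (Suc n))))"
      have sh1: "(\<Sum>k<Suc ?N. poly (P k) x * w^k) = 1 + w*T"
        unfolding sum.lessThan_Suc_shift T_def sum_distrib_left by (simp del: Pmu.simps add: Pmu.simps(1) P_def mult_ac distrib_left sum_distrib_left)
      have id: "s*u*(1+w*T) = bs - r" using Sident[of x lam w eta "Suc n"] Qsu[of x] sh1
        by (simp add: r_def u_def bs_def P_def)
      have su: "s*u = s - x*w" using Qsu[of x] by (simp add: u_def s_def algebra_simps)
      have bss: "bs = s - w\<^sup>2" by (simp add: bs_def s_def algebra_simps)
      have "(\<Sum>k<?N. (c*w^k) * poly (P (Suc k)) x) = c * T"
        unfolding T_def sum_distrib_left by (rule sum.cong) (auto simp: mult_ac)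
      then have "e n x = -r/(u*w*bs)" using alg_e[OF u0 bs0 w0 id su bss]
        by (simp add: e_def g_def f_def u_def c_def)
      moreover have "\<bar>r\<bar> \<le> (2+eta) * q^Suc ?N"
        unfolding r_def q_def M_def using rbound[OF eta B(1) _, of x w lam "Suc (Suc n)"] B(2) that w1 by simp
      moreover have "\<bar>1/u\<bar> \<le> 2" using inv_le2[OF uK[OF that]] by (simp add: u_def)
      moreover have "0 \<le> (2+eta)*M*q^?N" using eta q0 M1 by simp
      moreover have "\<bar>r\<bar> / \<bar>w\<bar> \<le> (2+eta)*M*q^?N"
      proof -
        have "(2+eta) * q^Suc ?N = ((2+eta)*M*q^?N) * \<bar>w\<bar>" by (simp add: q_def mult_ac)
        then have "\<bar>r\<bar> \<le> ((2+eta)*M*q^?N) * \<bar>w\<bar>" using \<open>\<bar>r\<bar> \<le> (2+eta) * q^Suc ?N\<close> by linarith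
        moreover have "0 < \<bar>w\<bar>" using w0 by simp
        ultimately show ?thesis using pos_divide_le_eq by blast
      qed
      ultimately have "(\<bar>r\<bar> / \<bar>w\<bar>) * \<bar>1/u\<bar> * \<bar>1/bs\<bar> \<le> ((2+eta)*M*q^?N) * 2 * 2"
        using bs2 by (intro mult_mono) auto
      moreover have "\<bar>e n x\<bar> = (\<bar>r\<bar> / \<bar>w\<bar>) * \<bar>1/u\<bar> * \<bar>1/bs\<bar>" using \<open>e n x = -r/(u*w*bs)\<close> by (simp add: abs_mult abs_divide)
      ultimately have "\<bar>e n x\<bar> \<le> ((2+eta)*M*q^?N) * 2 * 2" by linarith
      also have "\<dots> = 4*(2+eta)*M*q^?N" by (simp add: algebra_simps)
      finally show ?thesis .
    qed
    have em: "e n \<in> borel_measurable \<mu>"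
    proof -
      have sm: "(\<lambda>x. \<Sum>k<?N. (c*w^k) * poly (P (Suc k)) x) \<in> borel_measurable borel"
        by (rule borel_measurable_continuous_onI) (intro continuous_intros)
      show ?thesis unfolding e_def by (intro meas borel_measurable_diff sm gm)
    qed
    have eAE: "AE x in \<mu>. \<bar>e n x\<bar> \<le> 4*(2+eta)*M*q^?N" using AE_K by eventually_elim (rule eK)
    have hm: "h \<in> borel_measurable \<mu>" using sh by (simp add: sq_int_def)
    have hAE: "AE x in \<mu>. \<bar>h x\<bar> \<le> 4*(2+eta)*q^?N" using AE_K by eventually_elim (rule hK)
    note se = sq_int_bdd[OF em eAE] and shb = sq_int_bdd[OF hm hAE]
    have sDh: "sq_int \<mu> (D h)" using D_bdd sh unfolding bounded_L2_op_def by blast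
    have Dh: "(\<integral>x. (D h x)\<^sup>2 \<partial>\<mu>) \<le> \<bar>C\<bar> * (4*(2+eta)*q^?N)\<^sup>2"
    proof -
      have "(\<integral>x. (D h x)\<^sup>2 \<partial>\<mu>) \<le> C * (\<integral>x. (h x)\<^sup>2 \<partial>\<mu>)" by (rule C[OF sh])
      also have "\<dots> \<le> \<bar>C\<bar> * (\<integral>x. (h x)\<^sup>2 \<partial>\<mu>)" by (intro mult_right_mono) auto
      also have "\<dots> \<le> \<bar>C\<bar> * (4*(2+eta)*q^?N)\<^sup>2" by (intro mult_left_mono shb(2)) auto
      finally show ?thesis .
    qed
    have add: "AE x in \<mu>. D (\<lambda>t. h t + SN n t) x = D h x + D (SN n) x"
      using D_bdd sh sS unfolding bounded_L2_op_def by blast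
    have fh: "(\<lambda>t. h t + SN n t) = f" by (simp add: h_def)
    have DS: "AE x in \<mu>. D (SN n) x = (\<Sum>k<?N. (c*w^k) * poly (P (Suc k)) x)"
      unfolding SN_def P_def by (rule D_sum[OF D_bdd D_P])
    have AEe: "AE x in \<mu>. (D f x - g x)\<^sup>2 \<le> 2*(D h x)\<^sup>2 + 2*(e n x)\<^sup>2"
      using add DS
    proof eventually_elim
      case (elim x)
      then have "D f x - g x = D h x + e n x" using fh by (simp add: e_def)
      moreover have "(a + b)\<^sup>2 \<le> 2*a\<^sup>2 + 2*b\<^sup>2" for a b :: real
      proof -
        have "(a+b)\<^sup>2 + (a-b)\<^sup>2 = 2*a\<^sup>2 + 2*b\<^sup>2" by algebra
        moreover have "0 \<le> (a-b)\<^sup>2" by simp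
        ultimately show ?thesis by linarith
      qed
      ultimately show ?case by simp
    qed
    have "I \<le> (\<integral>x. 2*(D h x)\<^sup>2 + 2*(e n x)\<^sup>2 \<partial>\<mu>)"
      unfolding I_def
      by (rule integral_mono_AE[OF _ _ AEe]) (use sI sDh se(1) in \<open>auto simp: sq_int_def\<close>)
    also have "\<dots> = 2*(\<integral>x. (D h x)\<^sup>2 \<partial>\<mu>) + 2*(\<integral>x. (e n x)\<^sup>2 \<partial>\<mu>)"
      using sDh se(1) by (simp add: sq_int_def)
    also have "\<dots> \<le> 2*(\<bar>C\<bar> * (4*(2+eta)*q^?N)\<^sup>2) + 2*(4*(2+eta)*M*q^?N)\<^sup>2"
      using Dh se(2) by linarith
    also have "\<dots> = A * (q^?N)\<^sup>2"
    proof -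
      have gen: "2*(\<bar>C\<bar> * (a*X)\<^sup>2) + 2*(b*X)\<^sup>2 = (2*\<bar>C\<bar>*a\<^sup>2 + 2*b\<^sup>2)*X\<^sup>2" for a b X :: real
        by (simp add: power_mult_distrib algebra_simps)
      show ?thesis unfolding A_def using gen[of "4*(2+eta)" "q^?N" "4*(2+eta)*M"] by (simp add: mult.assoc)
    qed
    also have "\<dots> = A * (q\<^sup>2)^?N" by (metis power_mult mult.commute)
    finally show ?thesis .
  qed
  have lim: "(\<lambda>n. A * (q\<^sup>2)^(Suc (Suc n))) \<longlonglongrightarrow> 0"
  proof -
    have "q\<^sup>2 \<le> (1/2)\<^sup>2" by (rule power_mono[OF q12 q0])
    moreover have "(1/2::real)\<^sup>2 < 1" by (simp add: power2_eq_square)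
    ultimately have "q\<^sup>2 < 1" by linarith
    then have "(\<lambda>n. (q\<^sup>2)^n) \<longlonglongrightarrow> 0" by (intro LIMSEQ_power_zero) simp
    then have "(\<lambda>n. (q\<^sup>2)^(Suc (Suc n))) \<longlonglongrightarrow> 0" using LIMSEQ_Suc[OF LIMSEQ_Suc] by blast
    then show ?thesis by (intro tendsto_mult_right_zero)
  qed
  have "I \<le> 0" by (rule tendsto_lowerbound[OF lim]) (use bound in auto)
  moreover have "0 \<le> I" unfolding I_def by simp
  ultimately have "I = 0" by simp
  then have "AE x in \<mu>. (D f x - g x)\<^sup>2 = 0"
    using integral_nonneg_eq_0_iff_AE[of \<mu> "\<lambda>x. (D f x - g x)\<^sup>2"] sI by (simp add: I_def sq_int_def)
  then show ?thesis by eventually_elim (simp add: f_def g_def bs_def)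
qed

end

lemma alg_R:
  fixes lam eta z w x R :: real
  assumes wz: "w = z * (1 + lam*w + (eta+1)*w\<^sup>2)" and z0: "z \<noteq> 0" and w0: "w \<noteq> 0"
    and eta: "eta \<ge> 0" and zw: "1 - z*w \<noteq> 0"
    and R: "R = 1 - lam*z - 2*z*(eta+1)*w"
  shows "x * (4 * z\<^sup>2 * (eta + 1)\<^sup>2 / ((2 * eta + 1 + lam * z + R) * (1 - lam * z - R)))
             - 2 * z * (eta + 1) / (2 * eta + 1 + lam * z + R) = (x - w) / (1 + lam * w + eta * w\<^sup>2)"
proof -
  have E0: "eta + 1 \<noteq> 0" using eta by simp
  have a: "2 * eta + 1 + lam * z + R = 2*(eta+1)*(1 - z*w)" using R by (simp add: algebra_simps)
  have b: "1 - lam * z - R = 2*z*(eta+1)*w" using R by simp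
  have base: "1 + lam * w + eta * w\<^sup>2 = w*(1 - z*w)/z"
  proof -
    have "w*(1 - z*w) = z * (1 + lam * w + eta * w\<^sup>2)"
      using wz by algebra
    then show ?thesis using z0 by (simp add: field_simps)
  qed
  have gen: "x * (4 * z\<^sup>2 * E\<^sup>2 / ((2*E*u) * (2*z*E*w)))
             - 2 * z * E / (2*E*u) = (x - w) / (w*u/z)" if "E \<noteq> 0" "u \<noteq> 0" for E u :: real
  proof -
    have 1: "4 * z\<^sup>2 * E\<^sup>2 / ((2*E*u) * (2*z*E*w)) = z/(u*w)" using that z0 w0 by (simp add: field_simps power2_eq_square)
    have 2: "2 * z * E / (2*E*u) = z/u" using that by simp
    have 3: "(x - w) / (w*u/z) = z*(x-w)/(w*u)" using that z0 w0 by (simp add: field_simps)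
    show ?thesis unfolding 1 2 3 using that z0 w0 by (simp add: field_simps)
  qed
  have "x * (4 * z\<^sup>2 * (eta + 1)\<^sup>2 / ((2*(eta+1)*(1 - z*w)) * (2*z*(eta+1)*w)))
             - 2 * z * (eta + 1) / (2*(eta+1)*(1 - z*w)) = (x - w) / (w*(1 - z*w)/z)"
    by (rule gen[OF E0 zw])
  then show ?thesis unfolding a b base .
qed


theorem mainTheorem4:
  fixes lam eta :: real
    and \<mu> :: "real measure"
    and D :: "(real \<Rightarrow> real) \<Rightarrow> (real \<Rightarrow> real)"
    and \<phi> :: "real \<Rightarrow> real"
  assumes eta: "eta \<ge> 0"
    and sets_mu: "sets \<mu> = sets borel"
    and prob: "prob_space \<mu>"
    and cpt: "\<exists>K. compact K \<and> emeasure \<mu> (UNIV - K) = 0"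
    and orth: "\<And>n m. n \<noteq> m \<Longrightarrow>
                 (\<integral>x. poly (Pmu lam eta n) x * poly (Pmu lam eta m) x \<partial>\<mu>) = 0"
    and D_bdd: "bounded_L2_op \<mu> D"
    and D_P: "\<And>n. AE x in \<mu>. D (poly (Pmu lam eta n)) x = poly (Pmu lam eta (Suc n)) x"
    and phi0: "\<phi> 0 = 0"
    and phi_cont: "isCont \<phi> 0"
    and phi_inv: "\<exists>\<rho>>0. \<forall>z. \<bar>z\<bar> < \<rho> \<longrightarrow> Psi lam (eta + 1) (\<phi> z) = z"
  shows "\<exists>\<epsilon>>0.
     (\<forall>z. \<bar>z\<bar> < \<epsilon> \<longrightarrow>
        (AE x in \<mu>. D (\<lambda>t. 1 / (1 - t * z)) x =
           ((x - \<phi> z) / (1 + lam * \<phi> z + eta * (\<phi> z)\<^sup>2)) * (1 / (1 - x * z)))) \<and>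
     (\<forall>z. 0 < \<bar>z\<bar> \<and> \<bar>z\<bar> < \<epsilon> \<longrightarrow>
        (let R = sqrt ((1 - lam * z)\<^sup>2 - 4 * z\<^sup>2 * (eta + 1)) in
        (AE x in \<mu>. D (\<lambda>t. 1 / (1 - t * z)) x =
           (x * (4 * z\<^sup>2 * (eta + 1)\<^sup>2 / ((2 * eta + 1 + lam * z + R) * (1 - lam * z - R)))
             - 2 * z * (eta + 1) / (2 * eta + 1 + lam * z + R)) * (1 / (1 - x * z)))))"
proof -
  obtain K where cK: "compact K" and nK: "emeasure \<mu> (UNIV - K) = 0" using cpt by blast
  interpret L: L2s \<mu> K
    by (rule L2s.intro[OF prob]) (unfold_locales, use sets_mu cK nK in auto)
  obtain B0 where B0: "\<forall>x\<in>K. norm x \<le> B0" using compact_imp_bounded[OF cK] bounded_iff by metis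
  define B where "B = max B0 0"
  have B: "0 \<le> B" "\<forall>x\<in>K. \<bar>x\<bar> \<le> B" using B0 by (auto simp: B_def)
  define M where "M = B + \<bar>lam\<bar> + eta + 2"
  have M1: "1 \<le> M" unfolding M_def using B eta abs_ge_zero[of lam] by linarith
  define \<delta> where "\<delta> = 1/(2*M)"
  have \<delta>0: "0 < \<delta>" using M1 by (simp add: \<delta>_def)
  have M\<delta>: "M * \<delta> = 1/2" using M1 by (simp add: \<delta>_def)
  obtain d where d0: "d > 0" and d: "\<And>z. \<bar>z\<bar> < d \<Longrightarrow> \<bar>\<phi> z\<bar> < \<delta>"
  proof -
    have "\<phi> \<midarrow>0\<rightarrow> \<phi> 0" using phi_cont by (simp add: isCont_def)
    from LIM_D[OF this \<delta>0] obtain s where s: "s > 0" "\<forall>x. x \<noteq> 0 \<and> norm (x - 0) < s \<longrightarrow> norm (\<phi> x - \<phi> 0) < \<delta>"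
      by blast
    have "\<bar>\<phi> z\<bar> < \<delta>" if "\<bar>z\<bar> < s" for z
      using s(2)[rule_format, of z] that phi0 \<delta>0 by (cases "z = 0") auto
    then show ?thesis using that s(1) by blast
  qed
  obtain \<rho> where \<rho>0: "\<rho> > 0" and \<rho>: "\<And>z. \<bar>z\<bar> < \<rho> \<Longrightarrow> Psi lam (eta + 1) (\<phi> z) = z"
    using phi_inv by blast
  define \<epsilon> where "\<epsilon> = min (min d \<rho>) (min (1/(2*(B+1))) (1/(eta + \<bar>lam\<bar> + 2)))"
  have \<epsilon>0: "\<epsilon> > 0" using d0 \<rho>0 B eta by (simp add: \<epsilon>_def)
  have wz: "\<phi> z = z * (1 + lam * \<phi> z + (eta+1) * (\<phi> z)\<^sup>2) \<and> (z \<noteq> 0 \<longrightarrow> \<phi> z \<noteq> 0)"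
    if "\<bar>z\<bar> < \<epsilon>" for z
  proof (cases "z = 0")
    case True then show ?thesis using phi0 by simp
  next
    case False
    have "\<bar>z\<bar> < \<rho>" using that by (simp add: \<epsilon>_def)
    then have p: "\<phi> z / (1 + lam * \<phi> z + (eta+1) * (\<phi> z)\<^sup>2) = z" using \<rho> by (simp add: Psi_def)
    then have "1 + lam * \<phi> z + (eta+1) * (\<phi> z)\<^sup>2 \<noteq> 0" using False by auto
    then have "\<phi> z = z * (1 + lam * \<phi> z + (eta+1) * (\<phi> z)\<^sup>2)" using p by (simp add: divide_eq_eq)
    moreover have "\<phi> z \<noteq> 0" using p False by auto
    ultimately show ?thesis by blast
  qed
  have small: "\<bar>z\<bar> * B \<le> 1/2 \<and> M * \<bar>\<phi> z\<bar> \<le> 1/2 \<and> \<bar>\<phi> z\<bar> \<le> 1/2 \<and> \<bar>z\<bar> * (eta + \<bar>lam\<bar> + 2) < 1"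
    if "\<bar>z\<bar> < \<epsilon>" for z
  proof -
    have z1: "\<bar>z\<bar> < 1/(2*(B+1))" and z2: "\<bar>z\<bar> < 1/(eta + \<bar>lam\<bar> + 2)" and z3: "\<bar>z\<bar> < d"
      using that by (auto simp: \<epsilon>_def)
    have "\<bar>z\<bar> * (2*(B+1)) < 1" using z1 B by (simp add: less_divide_eq mult.commute)
    then have a: "\<bar>z\<bar> * B \<le> 1/2" by (simp add: algebra_simps)
    have "M * \<bar>\<phi> z\<bar> \<le> M * \<delta>" using d[OF z3] M1 by simp
    then have b: "M * \<bar>\<phi> z\<bar> \<le> 1/2" using M\<delta> by simp
    have "1 * \<bar>\<phi> z\<bar> \<le> M * \<bar>\<phi> z\<bar>" by (rule mult_right_mono[OF M1]) simp
    then have c: "\<bar>\<phi> z\<bar> \<le> 1/2" using b by simp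
    have "0 < eta + \<bar>lam\<bar> + 2" using eta by simp
    then have e: "\<bar>z\<bar> * (eta + \<bar>lam\<bar> + 2) < 1" using z2 by (simp add: less_divide_eq)
    show ?thesis using a b c e by blast
  qed
  have base: "1/2 \<le> 1 + lam * \<phi> z + eta * (\<phi> z)\<^sup>2" if "\<bar>z\<bar> < \<epsilon>" for z
  proof -
    let ?w = "\<phi> z"
    have sm: "M * \<bar>?w\<bar> \<le> 1/2" "\<bar>?w\<bar> \<le> 1/2" using small[OF that] by auto
    have "\<bar>lam * ?w\<bar> = \<bar>lam\<bar> * \<bar>?w\<bar>" by (simp add: abs_mult)
    have "eta * ?w\<^sup>2 \<ge> 0" using eta by simp
    have "\<bar>lam\<bar> * \<bar>?w\<bar> \<le> M * \<bar>?w\<bar>"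
      by (rule mult_right_mono) (use B eta in \<open>auto simp: M_def\<close>)
    then have "\<bar>lam * ?w\<bar> \<le> 1/2" using sm by (simp add: abs_mult)
    then show ?thesis using \<open>eta * ?w\<^sup>2 \<ge> 0\<close> by arith
  qed
  have part1: "AE x in \<mu>. D (\<lambda>t. 1 / (1 - t * z)) x =
           ((x - \<phi> z) / (1 + lam * \<phi> z + eta * (\<phi> z)\<^sup>2)) * (1 / (1 - x * z))"
    if z: "\<bar>z\<bar> < \<epsilon>" for z
  proof (cases "z = 0")
    case True
    have f: "(\<lambda>t::real. 1 / (1 - t * z)) = poly (Pmu lam eta 0)" using True by (simp add: fun_eq_iff)
    show ?thesis unfolding f using D_P[of 0] by eventually_elim (simp add: True phi0)
  next
    case False
    have w: "\<phi> z = z * (1 + lam * \<phi> z + (1+eta) * (\<phi> z)\<^sup>2)" "\<phi> z \<noteq> 0"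
      using wz[OF z] False by (auto simp: add.commute)
    show ?thesis
      by (rule L.core[OF eta D_bdd D_P B w(2) w(1)]) (use small[OF z] base[OF z] in \<open>simp_all add: M_def\<close>)
  qed
  show ?thesis
  proof (intro exI[of _ \<epsilon>] conjI allI impI \<epsilon>0)
    fix z :: real assume "\<bar>z\<bar> < \<epsilon>" then show "AE x in \<mu>. D (\<lambda>t. 1 / (1 - t * z)) x =
           ((x - \<phi> z) / (1 + lam * \<phi> z + eta * (\<phi> z)\<^sup>2)) * (1 / (1 - x * z))" by (rule part1)
  next
    fix z :: real assume zz: "0 < \<bar>z\<bar> \<and> \<bar>z\<bar> < \<epsilon>"
    then have z: "\<bar>z\<bar> < \<epsilon>" and z0: "z \<noteq> 0" by auto
    let ?w = "\<phi> z"
    have w: "?w = z * (1 + lam * ?w + (eta+1) * ?w\<^sup>2)" "?w \<noteq> 0" using wz[OF z] z0 by auto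
    have sm: "\<bar>?w\<bar> \<le> 1/2" "\<bar>z\<bar> * (eta + \<bar>lam\<bar> + 2) < 1" using small[OF z] by auto
    define y where "y = 1 - lam * z - 2 * z * (eta + 1) * ?w"
    have ypos: "0 < y"
    proof -
      have "\<bar>2 * z * (eta + 1) * ?w\<bar> = \<bar>z\<bar> * (eta + 1) * (2 * \<bar>?w\<bar>)" using eta by (simp add: abs_mult)
      also have "\<dots> \<le> \<bar>z\<bar> * (eta + 1) * 1" using sm(1) eta by (intro mult_left_mono) auto
      finally have a: "\<bar>2 * z * (eta + 1) * ?w\<bar> \<le> \<bar>z\<bar> * (eta + 1)" by simp
      have b: "\<bar>lam * z\<bar> = \<bar>z\<bar> * \<bar>lam\<bar>" by (simp add: abs_mult)
      have "\<bar>z\<bar> * (eta + 1) + \<bar>z\<bar> * \<bar>lam\<bar> < 1" using sm(2) by (simp add: algebra_simps)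
      then show ?thesis unfolding y_def using a b by arith
    qed
    have disc: "(1 - lam * z)\<^sup>2 - 4 * z\<^sup>2 * (eta + 1) = y\<^sup>2"
      unfolding y_def using w(1) by algebra
    have R: "sqrt ((1 - lam * z)\<^sup>2 - 4 * z\<^sup>2 * (eta + 1)) = y" using disc ypos by simp
    have zw: "1 - z * ?w \<noteq> 0"
    proof -
      have "\<bar>z\<bar> * 1 \<le> \<bar>z\<bar> * (eta + \<bar>lam\<bar> + 2)" using eta by (intro mult_left_mono) auto
      then have z1: "\<bar>z\<bar> < 1" using sm(2) by simp
      have "\<bar>z\<bar> * \<bar>?w\<bar> \<le> \<bar>z\<bar> * (1/2)" by (rule mult_left_mono[OF sm(1)]) simp
      then have "\<bar>z * ?w\<bar> < 1" using z1 by (simp add: abs_mult)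
      then show ?thesis by auto
    qed
    have co: "\<And>x. x * (4 * z\<^sup>2 * (eta + 1)\<^sup>2 / ((2 * eta + 1 + lam * z + y) * (1 - lam * z - y)))
             - 2 * z * (eta + 1) / (2 * eta + 1 + lam * z + y) = (x - ?w) / (1 + lam * ?w + eta * ?w\<^sup>2)"
      by (rule alg_R[OF w(1) z0 w(2) eta zw]) (simp add: y_def)
    show "let R = sqrt ((1 - lam * z)\<^sup>2 - 4 * z\<^sup>2 * (eta + 1)) in
        (AE x in \<mu>. D (\<lambda>t. 1 / (1 - t * z)) x =
           (x * (4 * z\<^sup>2 * (eta + 1)\<^sup>2 / ((2 * eta + 1 + lam * z + R) * (1 - lam * z - R)))
             - 2 * z * (eta + 1) / (2 * eta + 1 + lam * z + R)) * (1 / (1 - x * z)))"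
      unfolding Let_def R co by (rule part1[OF z])
  qed
qed

end
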